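(* Let $Y$ be a real symmetric log-concave random variable, $p\geq 2$ and $V>0$ with $\|Y\|_p\geq V$. Then $\mathbb{E}(|Y|\wedge V)^p\geq (V/12)^p$.
   Context: $\|Y\|_p:=(\mathbb{E}|Y|^p)^{1/p}$; $a\wedge b=\min\{a,b\}$. A real random variable is log-concave if its law $\mu$ satisfies $\mu(\lambda K+(1-\lambda)L)\geq\mu(K)^\lambda\mu(L)^{1-\lambda}$ for all nonempty compact $K,L\subset\mathbb{R}$ and $\lambda\in[0,1]$; symmetric means $Y$ and $-Y$ have the same law. *)

theory Defs
  imports "HOL-Probability.Probability"
begin

definition log_concave_measure :: "real measure \<Rightarrow> bool" where
  "log_concave_measure \<mu> \<longleftrightarrow>
     (\<forall>K L lam. compact K \<and> K \<noteq> {} \<and> compact L \<and> L \<noteq> {} \<and> 0 \<le> lam \<and> lam \<le> 1 \<longrightarrow>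
        measure \<mu> {lam * k + (1 - lam) * l | k l. k \<in> K \<and> l \<in> L}
          \<ge> measure \<mu> K powr lam * measure \<mu> L powr (1 - lam))"

definition log_concave_rv :: "'a measure \<Rightarrow> ('a \<Rightarrow> real) \<Rightarrow> bool" where
  "log_concave_rv M Y \<longleftrightarrow> log_concave_measure (distr M borel Y)"

definition symmetric_rv :: "'a measure \<Rightarrow> ('a \<Rightarrow> real) \<Rightarrow> bool" where
  "symmetric_rv M Y \<longleftrightarrow> distr M borel Y = distr M borel (\<lambda>x. - Y x)"

end

theory Submission imports Defs begin

lemma lc_step:
  fixes \<mu> :: "real measure" and t N :: real and n :: nat
  assumes fm: "finite_measure \<mu>" and sets: "sets \<mu> = sets borel"
    and lc: "log_concave_measure \<mu>" and t: "t > 0" and n: "n \<ge> 2" and N: "N \<ge> n * t"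
  shows "measure \<mu> {t..} ^ n \<ge> measure \<mu> {n*t..N} * measure \<mu> {0..N} ^ (n - 1)"
proof -
  define lam where "lam = 1 / real n"
  have lam0: "0 < lam" and lam1: "lam < 1" using n by (auto simp: lam_def)
  let ?C = "{lam * k + (1 - lam) * l | k l. k \<in> {n*t..N} \<and> l \<in> {0..N}}"
  have ne1: "{n*t..N} \<noteq> {}" using N by auto
  have ne2: "{0..N} \<noteq> {}" using N t by (auto intro: order_trans[of 0 "n*t" N])
  have "measure \<mu> ?C \<ge> measure \<mu> {n*t..N} powr lam * measure \<mu> {0..N} powr (1 - lam)"
    using lc ne1 ne2 lam0 lam1 unfolding log_concave_measure_def
    by (elim allE[where x="{n*t..N}"] allE[where x="{0..N}"] allE[where x=lam]) auto
  moreover have "?C \<subseteq> {t..}"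
  proof
    fix z assume "z \<in> ?C"
    then obtain k l where z: "z = lam * k + (1 - lam) * l" "k \<ge> n*t" "l \<ge> 0" by auto
    have "lam * k \<ge> lam * (n*t)" using z lam0 by (intro mult_left_mono) auto
    moreover have "lam * (n*t) = t" using n by (simp add: lam_def)
    moreover have "(1 - lam) * l \<ge> 0" using z lam1 by auto
    ultimately show "z \<in> {t..}" using z by auto
  qed
  then have "measure \<mu> ?C \<le> measure \<mu> {t..}"
    using fm sets by (intro finite_measure.finite_measure_mono) auto
  ultimately have main: "measure \<mu> {n*t..N} powr lam * measure \<mu> {0..N} powr (1 - lam) \<le> measure \<mu> {t..}"
    by linarith
  define a where "a = measure \<mu> {n*t..N}"
  define b where "b = measure \<mu> {0..N}"
  have a0: "a \<ge> 0" and b0: "b \<ge> 0" by (auto simp: a_def b_def)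
  have "(a powr lam * b powr (1 - lam)) ^ n = a * b ^ (n - 1)"
  proof -
    have "(a powr lam) ^ n = a"
    proof (cases "a = 0")
      case True then show ?thesis using n by simp
    next
      case False
      then have "(a powr lam) ^ n = (a powr lam) powr real n" using a0 by (simp add: powr_realpow)
      also have "\<dots> = a" using n a0 by (simp add: powr_powr lam_def)
      finally show ?thesis .
    qed
    moreover have "(b powr (1 - lam)) ^ n = b ^ (n - 1)"
    proof (cases "b = 0")
      case True then show ?thesis using n lam1 by (simp add: power_0_left)
    next
      case False
      then have "(b powr (1 - lam)) ^ n = (b powr (1 - lam)) powr real n" using b0 by (simp add: powr_realpow)
      also have "\<dots> = b powr (real (n - 1))"
      proof -
        have "(1 - lam) * real n = real (n - 1)" using n by (simp add: lam_def field_simps of_nat_diff)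
        then show ?thesis by (simp add: powr_powr)
      qed
      also have "\<dots> = b ^ (n - 1)" using False b0 by (simp add: powr_realpow)
      finally show ?thesis .
    qed
    ultimately show ?thesis by (simp add: power_mult_distrib)
  qed
  moreover have "(a powr lam * b powr (1 - lam)) ^ n \<le> measure \<mu> {t..} ^ n"
    using main by (intro power_mono) (auto simp: a_def b_def)
  ultimately show ?thesis by (simp add: a_def b_def)
qed

lemma lim_Icc:
  fixes \<mu> :: "real measure"
  assumes fm: "finite_measure \<mu>" and sets: "sets \<mu> = sets borel" and c: "c \<le> d"
  shows "(\<lambda>m. measure \<mu> {c..d + real m}) \<longlonglongrightarrow> measure \<mu> {c..}"
proof -
  have "(\<lambda>m. measure \<mu> {c..d + real m}) \<longlonglongrightarrow> measure \<mu> (\<Union>m. {c..d + real m})"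
  proof (rule finite_measure.finite_Lim_measure_incseq[OF fm])
    have "range (\<lambda>m. {c..d + real m}) \<subseteq> sets borel" by (auto intro: borel_closed)
    then show "range (\<lambda>m. {c..d + real m}) \<subseteq> sets \<mu>" unfolding sets .
    show "incseq (\<lambda>m. {c..d + real m})"
    proof (rule monoI)
      fix a b :: nat assume "a \<le> b"
      then show "{c..d + real a} \<subseteq> {c..d + real b}" by auto
    qed
  qed
  moreover have "(\<Union>m. {c..d + real m}) = {c..}"
  proof (intro equalityI subsetI)
    fix x assume "x \<in> {c..}"
    obtain m :: nat where "x - d < m" using reals_Archimedean2 by blast
    then have "x \<in> {c..d + real m}" using \<open>x \<in> {c..}\<close> by simp
    then show "x \<in> (\<Union>m. {c..d + real m})" by blast
  next
    fix x assume "x \<in> (\<Union>m. {c..d + real m})"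
    then show "x \<in> {c..}" by auto
  qed
  ultimately show ?thesis by simp
qed

lemma lc_tail:
  fixes \<mu> :: "real measure" and t :: real and n :: nat
  assumes fm: "finite_measure \<mu>" and sets: "sets \<mu> = sets borel"
    and lc: "log_concave_measure \<mu>" and t: "t > 0" and n: "n \<ge> 2"
  shows "measure \<mu> {n*t..} * measure \<mu> {0..} ^ (n - 1) \<le> measure \<mu> {t..} ^ n"
proof -
  have l1: "(\<lambda>m. measure \<mu> {n*t..n*t + real m}) \<longlonglongrightarrow> measure \<mu> {n*t..}"
    using lim_Icc[OF fm sets, of "n*t" "n*t"] by simp
  have l2: "(\<lambda>m. measure \<mu> {0..n*t + real m}) \<longlonglongrightarrow> measure \<mu> {0..}"
    using lim_Icc[OF fm sets, of 0 "n*t"] t by simp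
  have "(\<lambda>m. measure \<mu> {n*t..n*t + real m} * measure \<mu> {0..n*t + real m} ^ (n - 1))
      \<longlonglongrightarrow> measure \<mu> {n*t..} * measure \<mu> {0..} ^ (n - 1)"
    by (intro tendsto_intros l1 l2)
  then show ?thesis
  proof (rule LIMSEQ_le_const2, intro exI allI impI)
    fix m :: nat
    show "measure \<mu> {n*t..n*t + real m} * measure \<mu> {0..n*t + real m} ^ (n - 1) \<le> measure \<mu> {t..} ^ n"
      by (rule lc_step[OF fm sets lc t n]) simp
  qed
qed

lemma tail_M:
  fixes M :: "'a measure" and Y :: "'a \<Rightarrow> real" and t :: real and n :: nat
  assumes P: "prob_space M" and Ym: "Y \<in> borel_measurable M"
    and sym: "symmetric_rv M Y" and lcv: "log_concave_rv M Y" and t: "t > 0" and n: "n \<ge> 1"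
  shows "measure M {x\<in>space M. n*t \<le> \<bar>Y x\<bar>} \<le> (measure M {x\<in>space M. t \<le> \<bar>Y x\<bar>}) ^ n"
proof -
  define \<mu> where "\<mu> = distr M borel Y"
  have Ym': "Y \<in> M \<rightarrow>\<^sub>M borel" using Ym by simp
  have Ymn: "(\<lambda>x. - Y x) \<in> M \<rightarrow>\<^sub>M borel" using Ym by simp
  have ps: "prob_space \<mu>" unfolding \<mu>_def by (rule prob_space.prob_space_distr[OF P Ym'])
  then have fm: "finite_measure \<mu>" by (simp add: prob_space_def)
  have sets: "sets \<mu> = sets borel" by (simp add: \<mu>_def)
  have lc: "log_concave_measure \<mu>" using lcv by (simp add: log_concave_rv_def \<mu>_def)
  have mu_eq: "measure \<mu> A = measure M {x\<in>space M. Y x \<in> A}" if "A \<in> sets borel" for A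
    unfolding \<mu>_def using measure_distr[OF Ym' that] by (simp add: vimage_def Int_def conj_commute)
  have symm: "measure \<mu> {..-c} = measure \<mu> {c..}" for c
  proof -
    have "measure \<mu> {c..} = measure (distr M borel (\<lambda>x. - Y x)) {c..}"
      using sym by (simp add: symmetric_rv_def \<mu>_def)
    also have "\<dots> = measure M ((\<lambda>x. - Y x) -` {c..} \<inter> space M)"
      by (rule measure_distr[OF Ymn]) simp
    also have "(\<lambda>x. - Y x) -` {c..} \<inter> space M = {x\<in>space M. Y x \<in> {..-c}}" by auto
    also have "measure M \<dots> = measure \<mu> {..-c}" by (simp add: mu_eq)
    finally show ?thesis by simp
  qed
  have h0: "measure \<mu> {0..} \<ge> 1/2"
  proof -
    have un: "{..0::real} \<union> {0..} = space \<mu>" using sets_eq_imp_space_eq[OF sets] by auto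
    have "1 = measure \<mu> ({..0} \<union> {0..})" unfolding un using prob_space.prob_space[OF ps] by simp
    also have "\<dots> \<le> measure \<mu> {..0} + measure \<mu> {0..}" using sets by (intro measure_Un_le) auto
    finally show ?thesis using symm[of 0] by simp
  qed
  have g_eq: "measure M {x\<in>space M. s \<le> \<bar>Y x\<bar>} = 2 * measure \<mu> {s..}" if s: "s > 0" for s
  proof -
    have "{x\<in>space M. s \<le> \<bar>Y x\<bar>} = {x\<in>space M. Y x \<in> {..-s} \<union> {s..}}" by auto
    then have "measure M {x\<in>space M. s \<le> \<bar>Y x\<bar>} = measure \<mu> ({..-s} \<union> {s..})"
      by (simp add: mu_eq)
    also have "\<dots> = measure \<mu> {..-s} + measure \<mu> {s..}"
      using s sets by (intro finite_measure.finite_measure_Union[OF fm]) auto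
    finally show ?thesis using symm[of s] by simp
  qed
  show ?thesis
  proof (cases "n = 1")
    case True then show ?thesis by simp
  next
    case False
    then have n2: "n \<ge> 2" using n by simp
    have nt: "n * t > 0" using t n by simp
    have A: "measure \<mu> {n*t..} * measure \<mu> {0..} ^ (n - 1) \<le> measure \<mu> {t..} ^ n"
      by (rule lc_tail[OF fm sets lc t n2])
    have "measure \<mu> {n*t..} * (1/2) ^ (n - 1) \<le> measure \<mu> {n*t..} * measure \<mu> {0..} ^ (n - 1)"
      using h0 by (intro mult_left_mono power_mono) auto
    with A have B: "measure \<mu> {n*t..} * (1/2) ^ (n - 1) \<le> measure \<mu> {t..} ^ n" by linarith
    have "2 * measure \<mu> {n*t..} = 2 ^ n * (measure \<mu> {n*t..} * (1/2) ^ (n - 1))"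
      using n by (cases n) (auto simp: power_divide field_simps)
    also have "\<dots> \<le> 2 ^ n * measure \<mu> {t..} ^ n" using B by simp
    also have "\<dots> = (2 * measure \<mu> {t..}) ^ n" by (simp add: power_mult_distrib)
    finally show ?thesis using g_eq[OF nt] g_eq[OF t] by simp
  qed
qed

lemma six_pow: "3 * (real m + 2) \<le> 6 ^ (m + 1)"
proof (induction m)
  case 0 then show ?case by simp
next
  case (Suc m)
  have "3 * (real (Suc m) + 2) \<le> 3 * (real m + 2) + 3" by simp
  also have "\<dots> \<le> 6 ^ (m + 1) + 3" using Suc by simp
  also have "\<dots> \<le> 6 ^ (Suc m + 1)" using one_le_power[of "6::real" "m+1"] by simp
  finally show ?case .
qed

lemma term_bound:
  fixes p V q :: real and m :: nat
  assumes p: "p \<ge> 2" and V: "V > 0" and q0: "0 \<le> q" and q: "q \<le> (1/12) powr p"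
  shows "((real m + 2) * V) powr p * q ^ (m + 1) \<le> V powr p * ((1/3) * (1/2) ^ (m + 1))"
proof -
  define a where "a = (real m + 2) / 12 ^ (m + 1)"
  have a0: "a \<ge> 0" by (simp add: a_def)
  have aB: "a \<le> (1/3) * (1/2) ^ (m + 1)"
  proof -
    have "(real m + 2) * (3 * 2 ^ (m+1)) \<le> 12 ^ (m + 1)"
    proof -
      have "(real m + 2) * (3 * 2 ^ (m+1)) = (3 * (real m + 2)) * 2 ^ (m+1)" by simp
      also have "\<dots> \<le> 6 ^ (m + 1) * 2 ^ (m+1)" using six_pow[of m] by (intro mult_right_mono) auto
      also have "\<dots> = 12 ^ (m+1)" by (simp add: power_mult_distrib[symmetric])
      finally show ?thesis .
    qed
    then show ?thesis unfolding a_def by (simp add: field_simps power_divide)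
  qed
  have a1: "a \<le> 1"
  proof -
    have "(1/2::real) ^ (m + 1) \<le> 1" by (rule power_le_one) auto
    then show ?thesis using aB by linarith
  qed
  have "q ^ (m + 1) \<le> ((1/12) powr p) ^ (m + 1)" using q q0 by (intro power_mono) auto
  also have "\<dots> = ((1/12) ^ (m+1)) powr p"
  proof -
    have e: "((1/12::real) ^ (m+1)) = (1/12) powr real (m+1)" by (rule powr_realpow[symmetric]) simp
    have "((1/12::real) powr p) ^ (m+1) = (1/12) powr (real (m+1) * p)" by (rule powr_power) simp
    also have "\<dots> = ((1/12) powr real (m+1)) powr p" by (simp add: powr_powr)
    finally show ?thesis unfolding e .
  qed
  finally have Q: "q ^ (m + 1) \<le> ((1/12) ^ (m+1)) powr p" .
  have s1: "((real m + 2) * V) powr p * q ^ (m + 1) \<le> ((real m + 2) * V) powr p * ((1/12) ^ (m+1)) powr p"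
    using Q by (intro mult_left_mono) auto
  have e2: "(real m + 2) * V * (1/12) ^ (m+1) = V * a"
    unfolding a_def by (simp add: power_one_over)
  have s2: "((real m + 2) * V) powr p * ((1/12) ^ (m+1)) powr p = V powr p * a powr p"
  proof -
    have "((real m + 2) * V) powr p * ((1/12) ^ (m+1)) powr p = ((real m + 2) * V * (1/12) ^ (m+1)) powr p"
      by (rule powr_mult[symmetric])
    also have "\<dots> = (V * a) powr p" by (simp only: e2)
    also have "\<dots> = V powr p * a powr p" by (rule powr_mult)
    finally show ?thesis .
  qed
  have s3: "a powr p \<le> a powr 1" using a0 a1 p by (intro powr_mono') auto
  have s4: "a powr 1 = a" using a0 by (cases "a = 0") auto
  have s5: "V powr p * a powr p \<le> V powr p * ((1/3) * (1/2) ^ (m + 1))"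
    using s3 s4 aB by (intro mult_left_mono) auto
  show ?thesis using s1 s2 s5 by linarith
qed

theorem lemma3p2:
  fixes M :: "'a measure" and Y :: "'a \<Rightarrow> real" and p V :: real
  assumes "prob_space M"
    and "Y \<in> borel_measurable M"
    and "symmetric_rv M Y"
    and "log_concave_rv M Y"
    and "p \<ge> 2" and "V > 0"
    and "(\<integral>\<^sup>+ x. ennreal (\<bar>Y x\<bar> powr p) \<partial>M) \<ge> ennreal (V powr p)"
  shows "(\<integral> x. (min \<bar>Y x\<bar> V) powr p \<partial>M) \<ge> (V / 12) powr p"
proof (rule ccontr)
  note P = assms(1) and Ym[measurable] = assms(2) and p = assms(5) and V = assms(6)
  have fm: "finite_measure M" using P by (simp add: prob_space_def)
  define f where "f x = (min \<bar>Y x\<bar> V) powr p" for x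
  define E where "E = (\<integral> x. f x \<partial>M)"
  define g where "g s = measure M {x\<in>space M. s \<le> \<bar>Y x\<bar>}" for s
  define S where "S m = {x\<in>space M. (real m + 1) * V \<le> \<bar>Y x\<bar>}" for m :: nat
  assume "\<not> (\<integral> x. (min \<bar>Y x\<bar> V) powr p \<partial>M) \<ge> (V / 12) powr p"
  then have Elt: "E < (V / 12) powr p" by (simp add: E_def f_def)
  have fmeas[measurable]: "f \<in> borel_measurable M" unfolding f_def by measurable
  have f0: "f x \<ge> 0" for x by (simp add: f_def)
  have fint: "integrable M f"
  proof (rule finite_measure.integrable_const_bound[OF fm _ fmeas])
    show "AE x in M. norm (f x) \<le> V powr p"
    proof (rule AE_I2)
      fix x
      have "min \<bar>Y x\<bar> V powr p \<le> V powr p" using V p by (intro powr_mono2) auto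
      then show "norm (f x) \<le> V powr p" by (simp add: f_def)
    qed
  qed
  have Sm[measurable]: "S m \<in> sets M" for m unfolding S_def by measurable
  have gV_set[measurable]: "{x\<in>space M. V \<le> \<bar>Y x\<bar>} \<in> sets M" by measurable
  have "V powr p * g V = (\<integral> x. V powr p * indicator {x\<in>space M. V \<le> \<bar>Y x\<bar>} x \<partial>M)"
    using fm by (simp add: g_def finite_measure.emeasure_eq_measure)
  also have "\<dots> \<le> E" unfolding E_def
  proof (rule integral_mono)
    show "integrable M (\<lambda>x. V powr p * indicator {x\<in>space M. V \<le> \<bar>Y x\<bar>} x)"
      using fm by (intro integrable_mult_right integrable_real_indicator) (auto simp: finite_measure.emeasure_eq_measure)
    show "integrable M f" by (rule fint)
    fix x assume "x \<in> space M"
    show "V powr p * indicator {x\<in>space M. V \<le> \<bar>Y x\<bar>} x \<le> f x"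
      by (auto simp: indicator_def f_def min_def)
  qed
  finally have gVE: "V powr p * g V \<le> E" .
  have Vp: "V powr p > 0" using V by simp
  have big: "12 powr p \<ge> 144"
  proof -
    have "12 powr p \<ge> 12 powr 2" using p by (intro powr_mono) auto
    then show ?thesis by simp
  qed
  have V12: "(V / 12) powr p = V powr p * (1/12) powr p" using V by (simp add: powr_mult[symmetric])
  have q0: "0 \<le> g V" by (simp add: g_def)
  have q: "g V \<le> (1/12) powr p"
  proof -
    have "V powr p * g V \<le> V powr p * (1/12) powr p" using gVE Elt V12 by simp
    then show ?thesis using Vp by simp
  qed
  have tail: "g ((real m + 1) * V) \<le> g V ^ (m + 1)" for m :: nat
    using tail_M[OF P Ym assms(3) assms(4) V, of "m + 1"] by (simp add: g_def add.commute)
  have termb: "((real m + 2) * V) powr p * g ((real m + 1) * V) \<le> V powr p * ((1/3) * (1/2) ^ (m + 1))" for m :: nat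
  proof -
    have "((real m + 2) * V) powr p * g ((real m + 1) * V) \<le> ((real m + 2) * V) powr p * g V ^ (m + 1)"
      using tail[of m] by (intro mult_left_mono) auto
    also have "\<dots> \<le> V powr p * ((1/3) * (1/2) ^ (m + 1))" by (rule term_bound[OF p V q0 q])
    finally show ?thesis .
  qed
  have pw: "ennreal (\<bar>Y x\<bar> powr p) \<le> ennreal (f x) + (\<Sum>m. ennreal (((real m + 2) * V) powr p) * indicator (S m) x)"
    if x: "x \<in> space M" for x
  proof (cases "\<bar>Y x\<bar> < V")
    case True then show ?thesis by (simp add: f_def min_def add_increasing2)
  next
    case False
    define k where "k = nat \<lfloor>\<bar>Y x\<bar> / V\<rfloor>"
    have k1: "k \<ge> 1" using False V by (simp add: k_def le_nat_iff le_floor_iff)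
    have kl: "real k \<le> \<bar>Y x\<bar> / V" using V False by (simp add: k_def)
    have ku: "\<bar>Y x\<bar> / V < real k + 1" using V by (simp add: k_def)
    define m where "m = k - 1"
    have mk: "real m + 1 = real k" using k1 by (simp add: m_def of_nat_diff)
    have inS: "x \<in> S m" using x kl V mk by (simp add: S_def field_simps)
    have "\<bar>Y x\<bar> < (real k + 1) * V" using ku V by (simp add: field_simps)
    moreover have "(real k + 1) * V = (real m + 2) * V" using mk by simp
    ultimately have "\<bar>Y x\<bar> \<le> (real m + 2) * V" by linarith
    then have "\<bar>Y x\<bar> powr p \<le> ((real m + 2) * V) powr p" using p by (intro powr_mono2) auto
    then have "ennreal (\<bar>Y x\<bar> powr p) \<le> ennreal (((real m + 2) * V) powr p) * indicator (S m) x"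
      using inS by (simp add: ennreal_leI)
    also have "\<dots> \<le> (\<Sum>i. ennreal (((real i + 2) * V) powr p) * indicator (S i) x)"
    proof -
      define F where "F = (\<lambda>i. ennreal (((real i + 2) * V) powr p) * indicator (S i) x)"
      have "F m \<le> suminf F" using sum_le_suminf[of F "{m}"] by simp
      then show ?thesis unfolding F_def .
    qed
    also have "\<dots> \<le> ennreal (f x) + \<dots>" by (simp add: add_increasing)
    finally show ?thesis .
  qed
  have I1: "(\<integral>\<^sup>+ x. ennreal (f x) \<partial>M) = ennreal E"
    unfolding E_def by (rule nn_integral_eq_integral[OF fint]) (simp add: f0)
  have "(\<integral>\<^sup>+ x. (\<Sum>m. ennreal (((real m + 2) * V) powr p) * indicator (S m) x) \<partial>M)
      = (\<Sum>m. ennreal (((real m + 2) * V) powr p) * emeasure M (S m))"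
    by (subst nn_integral_suminf) (auto simp: nn_integral_cmult_indicator)
  also have "\<dots> = (\<Sum>m. ennreal (((real m + 2) * V) powr p * g ((real m + 1) * V)))"
    using fm by (simp add: S_def g_def finite_measure.emeasure_eq_measure ennreal_mult' add.commute)
  also have "\<dots> \<le> (\<Sum>m. ennreal (V powr p * ((1/3) * (1/2) ^ (m + 1))))"
    by (intro suminf_le ennreal_leI termb) auto
  also have "\<dots> = ennreal (\<Sum>m. V powr p * ((1/3) * (1/2) ^ (m + 1)))"
    by (rule suminf_ennreal2) (auto intro!: summable_mult summable_geometric)
  also have "(\<Sum>m. V powr p * ((1/3) * (1/2) ^ (m + 1))) = V powr p / 3"
  proof -
    have g: "(\<lambda>m. (1/2::real) ^ m) sums 2" using geometric_sums[of "1/2::real"] by simp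
    have "(\<lambda>m. (1/2::real) * (1/2) ^ m) sums ((1/2) * 2)" by (rule sums_mult[OF g])
    then have "(\<lambda>m. (1/2::real) ^ (m + 1)) sums 1" by (simp add: power_add mult.commute)
    then have "(\<lambda>m. V powr p * ((1/3) * (1/2::real) ^ (m + 1))) sums (V powr p * ((1/3) * 1))"
      by (intro sums_mult sums_mult)
    then show ?thesis by (simp add: sums_iff)
  qed
  finally have I2: "(\<integral>\<^sup>+ x. (\<Sum>m. ennreal (((real m + 2) * V) powr p) * indicator (S m) x) \<partial>M)
      \<le> ennreal (V powr p / 3)" .
  have "ennreal (V powr p) \<le> (\<integral>\<^sup>+ x. ennreal (\<bar>Y x\<bar> powr p) \<partial>M)" by (rule assms(7))
  also have "\<dots> \<le> (\<integral>\<^sup>+ x. ennreal (f x) + (\<Sum>m. ennreal (((real m + 2) * V) powr p) * indicator (S m) x) \<partial>M)"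
    by (rule nn_integral_mono) (rule pw)
  also have "\<dots> = (\<integral>\<^sup>+ x. ennreal (f x) \<partial>M) + (\<integral>\<^sup>+ x. (\<Sum>m. ennreal (((real m + 2) * V) powr p) * indicator (S m) x) \<partial>M)"
    by (rule nn_integral_add) auto
  also have "\<dots> \<le> ennreal E + ennreal (V powr p / 3)"
    unfolding I1 by (rule add_left_mono[OF I2])
  finally have A: "ennreal (V powr p) \<le> ennreal E + ennreal (V powr p / 3)" .
  have E0: "0 \<le> E" unfolding E_def by (rule integral_nonneg_AE) (simp add: f0)
  have eq: "ennreal E + ennreal (V powr p / 3) = ennreal (E + V powr p / 3)"
    using E0 Vp by (intro ennreal_plus[symmetric]) auto
  have "ennreal (V powr p) \<le> ennreal (E + V powr p / 3)" using A by (simp only: eq)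
  moreover have nn: "0 \<le> E + V powr p / 3" using E0 Vp by linarith
  ultimately have "V powr p \<le> E + V powr p / 3"
    using ennreal_le_iff[OF nn] by blast
  moreover have "E < V powr p / 144"
  proof -
    have "(V / 12) powr p = V powr p / 12 powr p" by (rule powr_divide)
    also have "\<dots> \<le> V powr p / 144" using big Vp by (intro divide_left_mono) auto
    finally show ?thesis using Elt by linarith
  qed
  ultimately show False using Vp by linarith
qed

end
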